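(* Let $M\ge 1$ and let $T'\ge M$ be an integer. Let $H_{11},H_{12},H_{21},H_{22}$ be mutually independent $M\times M$ random matrices whose entries are i.i.d. $\mathcal{CN}(0,1)$, and define $$V_{11}=\frac{H_{12}^{-1}}{\sqrt{\mathrm{tr}\left(H_{12}^{-1}H_{12}^{-H}\right)}},\qquad V_{21}=\frac{H_{22}^{-1}}{\sqrt{\mathrm{tr}\left(H_{22}^{-1}H_{22}^{-H}\right)}}.$$ Let $c_1,c_2>0$ and $\sigma^2>0$ be constants. Let $\mathcal{C}_1,\mathcal{C}_2$ be finite sets of $M\times T'$ complex matrices (codebooks) such that for every two distinct $A,A'\in\mathcal{C}_1$ the difference $A-A'$ has rank $M$, and for every two distinct $B,B'\in\mathcal{C}_2$ the difference $B-B'$ has rank $M$. For $P>0$ and distinct pairs $(A,B)\neq(A',B')$ in $\mathcal{C}_1\times\mathcal{C}_2$, define the average pairwise error probability $$P_e\big((A,B)\to(A',B')\big)=\mathbb{E}\left[Q\left(\sqrt{\frac{P\,\left\|\sqrt{c_1}\,H_{11}V_{11}(A-A')+\sqrt{c_2}\,H_{21}V_{21}(B-B')\right\|^2}{2\sigma^2}}\right)\right],$$ where the expectation is over the channel matrices. Then there exists a constant $c>0$, independent of $P$, such that $P_e\big((A,B)\to(A',B')\big)\le c\,P^{-M}$ for all sufficiently large $P$.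
   Context: $\mathcal{CN}(0,1)$ denotes the circularly symmetric complex Gaussian distribution with mean $0$ and variance $1$. $Q(x)=\frac{1}{\sqrt{2\pi}}\int_x^\infty e^{-t^2/2}\,dt$ is the Gaussian tail function. $\|\cdot\|$ is the Frobenius norm, $A^{-H}$ denotes the conjugate transpose of $A^{-1}$, and $\mathrm{tr}$ is the trace. This quantity is the pairwise error probability of maximum-likelihood decoding of $(A,B)$ from $Y=\sqrt{c_1P}H_{11}V_{11}A+\sqrt{c_2P}H_{21}V_{21}B+N$ with $N$ having i.i.d. $\mathcal{CN}(0,\sigma^2)$ entries. *)

theory Defs
  imports "HOL-Analysis.Analysis"
begin

definition Qfun :: "real \<Rightarrow> real" where
  "Qfun x = (LBINT t:{x..}. exp (- (t\<^sup>2) / 2)) / sqrt (2 * pi)"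

text \<open>Distribution of an M x M random matrix with i.i.d. CN(0,1) entries:
  density prod_{i,j} (1/pi) exp(-|h_ij|^2) = exp(-||H||_F^2) / pi^(M*M) w.r.t. Lebesgue measure.
  (The norm on complex^'m^'m is the Frobenius norm.)\<close>
definition cgauss_mat :: "(complex^'m::finite^'m) measure" where
  "cgauss_mat = density lborel
     (\<lambda>H. ennreal (exp (- (norm H)\<^sup>2) / pi ^ (CARD('m) * CARD('m))))"

definition conj_transpose :: "complex^'n^'m \<Rightarrow> complex^'m^'n" where
  "conj_transpose A = (\<chi> i j. cnj (A $ j $ i))"

text \<open>Matrix inverse, set to 0 on the (probability-zero) set of singular matrices.\<close>
definition cinv :: "complex^'m^'m \<Rightarrow> complex^'m^'m" where
  "cinv H = (if invertible H then matrix_inv H else 0)"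

definition precoder :: "complex^'m::finite^'m \<Rightarrow> complex^'m^'m" where
  "precoder H = (1 / sqrt (Re (trace (cinv H ** conj_transpose (cinv H))))) *\<^sub>R cinv H"

definition channel_measure ::
  "((complex^'m::finite^'m) \<times> (complex^'m^'m) \<times> (complex^'m^'m) \<times> (complex^'m^'m)) measure" where
  "channel_measure = cgauss_mat \<Otimes>\<^sub>M (cgauss_mat \<Otimes>\<^sub>M (cgauss_mat \<Otimes>\<^sub>M cgauss_mat))"

definition pep ::
  "real \<Rightarrow> real \<Rightarrow> real \<Rightarrow> real \<Rightarrow> complex^'t^'m::finite \<Rightarrow> complex^'t^'m \<Rightarrow>
   complex^'t^'m \<Rightarrow> complex^'t^'m \<Rightarrow> real" where
  "pep c1 c2 \<sigma>2 P A A' B B' =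
     (\<integral>(H11, H12, H21, H22). Qfun (sqrt (P * (norm
         (sqrt c1 *\<^sub>R (H11 ** precoder H12 ** (A - A'))
          + sqrt c2 *\<^sub>R (H21 ** precoder H22 ** (B - B'))))\<^sup>2 / (2 * \<sigma>2)))
      \<partial>channel_measure)"

end

theory Submission
  imports Defs "HOL-Probability.Probability"
begin

lemma gauss1d:
  fixes a g :: real assumes a: "a > 0"
  shows "(\<integral>\<^sup>+ t. ennreal (exp (- a * (t - g)\<^sup>2)) \<partial>lborel) = ennreal (sqrt (pi / a))"
proof -
  define s where "s = sqrt (1 / (2 * a))"
  have s: "s > 0" using a by (simp add: s_def)
  have ss: "s\<^sup>2 = 1 / (2*a)" using a by (simp add: s_def)
  have eq: "exp (- a * (t - g)\<^sup>2) = sqrt (pi / a) * normal_density g s t" for t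
  proof -
    have "2 * pi * s\<^sup>2 = pi / a" using ss a by (simp add: field_simps)
    moreover have "-(t - g)\<^sup>2 / (2 * s\<^sup>2) = - a * (t - g)\<^sup>2" using a unfolding ss by (simp add: field_simps)
    ultimately show ?thesis using a by (simp add: normal_density_def)
  qed
  have "(\<integral>\<^sup>+ t. ennreal (exp (- a * (t - g)\<^sup>2)) \<partial>lborel)
      = (\<integral>\<^sup>+ t. ennreal (sqrt (pi / a)) * ennreal (normal_density g s t) \<partial>lborel)"
    using a by (intro nn_integral_cong, subst eq, intro ennreal_mult) auto
  also have "\<dots> = ennreal (sqrt (pi / a)) * (\<integral>\<^sup>+ t. ennreal (normal_density g s t) \<partial>lborel)"
    by (simp add: nn_integral_cmult)
  also have "(\<integral>\<^sup>+ t. ennreal (normal_density g s t) \<partial>lborel) = 1"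
    using prob_space.emeasure_space_1[OF prob_space_normal_density[of s g]] s
    by (simp add: emeasure_density)
  finally show ?thesis by simp
qed


lemma integral_le_from_nn:
  fixes f :: "'a \<Rightarrow> real"
  assumes "\<And>t. 0 \<le> f t" "(\<integral>\<^sup>+ t. ennreal (f t) \<partial>M) \<le> ennreal B" "0 \<le> B"
  shows "integral\<^sup>L M f \<le> B"
proof (cases "integrable M f")
  case True
  then have "ennreal (integral\<^sup>L M f) = (\<integral>\<^sup>+ t. ennreal (f t) \<partial>M)"
    using assms(1) by (subst nn_integral_eq_integral) auto
  then have "ennreal (integral\<^sup>L M f) \<le> ennreal B" using assms(2) by simp
  then show ?thesis using assms(3) by (simp add: ennreal_le_iff)
next
  case False
  then show ?thesis using assms(3) by (simp add: not_integrable_integral_eq)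
qed

lemma Qfun_bound:
  fixes x :: real assumes x: "0 \<le> x"
  shows "Qfun x \<le> 2 * exp (- x\<^sup>2 / 4)"
proof -
  have le: "indicator {x..} t *\<^sub>R exp (- (t\<^sup>2) / 2) \<le> exp (- x\<^sup>2 / 4) * exp (- (1/4) * (t - 0)\<^sup>2)" for t
  proof (cases "x \<le> t")
    case True
    then have "x\<^sup>2 \<le> t\<^sup>2" using x by (simp add: power_mono)
    then have "- (t\<^sup>2) / 2 \<le> - x\<^sup>2 / 4 + - (1/4) * (t - 0)\<^sup>2" by simp
    then show ?thesis using True by (simp add: exp_add[symmetric])
  qed simp
  have "(\<integral>\<^sup>+ t. ennreal (indicator {x..} t *\<^sub>R exp (- (t\<^sup>2) / 2)) \<partial>lborel)
      \<le> (\<integral>\<^sup>+ t. ennreal (exp (- x\<^sup>2 / 4)) * ennreal (exp (- (1/4) * (t - 0)\<^sup>2)) \<partial>lborel)"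
    by (intro nn_integral_mono) (metis le ennreal_leI ennreal_mult exp_ge_zero)
  also have "\<dots> = ennreal (exp (- x\<^sup>2 / 4)) * ennreal (sqrt (pi / (1/4)))"
    by (simp add: nn_integral_cmult gauss1d[of "1/4" 0, simplified] del: mult_minus_left)
  also have "\<dots> = ennreal (exp (- x\<^sup>2 / 4) * sqrt (pi / (1/4)))"
    by (simp add: ennreal_mult)
  finally have I: "(LBINT t:{x..}. exp (- (t\<^sup>2) / 2)) \<le> exp (- x\<^sup>2 / 4) * sqrt (pi / (1/4))"
    unfolding set_lebesgue_integral_def
    by (intro integral_le_from_nn) auto
  have "sqrt (pi / (1/4)) = sqrt 2 * sqrt (2 * pi)"
    by (simp add: real_sqrt_mult[symmetric])
  then have "Qfun x \<le> exp (- x\<^sup>2 / 4) * sqrt 2"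
    using I unfolding Qfun_def by (simp add: divide_le_eq mult.assoc)
  also have "\<dots> \<le> exp (- x\<^sup>2 / 4) * 2"
    by (intro mult_left_mono) (auto simp: real_sqrt_le_iff[of 2 4, simplified] order_trans[OF _ real_sqrt_le_mono[of 2 4]])
  finally show ?thesis by simp
qed


lemma nn_pair_le_fst:
  assumes "sigma_finite_measure M2" "sigma_finite_measure M1"
  shows "(\<integral>\<^sup>+ z. f z \<partial>(M1 \<Otimes>\<^sub>M M2)) \<le> (\<integral>\<^sup>+ x. \<integral>\<^sup>+ y. f (x, y) \<partial>M2 \<partial>M1)"
proof -
  interpret M2: sigma_finite_measure M2 by fact
  interpret M1: sigma_finite_measure M1 by fact
  interpret P: pair_sigma_finite M1 M2 by standard
  show ?thesis
    unfolding nn_integral_def[of "M1 \<Otimes>\<^sub>M M2"]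
  proof (rule SUP_least, clarify)
    fix g assume g: "simple_function (M1 \<Otimes>\<^sub>M M2) g" "g \<le> f"
    have "integral\<^sup>S (M1 \<Otimes>\<^sub>M M2) g = integral\<^sup>N (M1 \<Otimes>\<^sub>M M2) g"
      using g(1) by (simp add: nn_integral_eq_simple_integral)
    also have "\<dots> = (\<integral>\<^sup>+ x. \<integral>\<^sup>+ y. g (x, y) \<partial>M2 \<partial>M1)"
      using g(1) by (intro M2.nn_integral_fst[symmetric] borel_measurable_simple_function)
    also have "\<dots> \<le> (\<integral>\<^sup>+ x. \<integral>\<^sup>+ y. f (x, y) \<partial>M2 \<partial>M1)"
      using g(2) by (intro nn_integral_mono) (auto simp: le_fun_def)
    finally show "integral\<^sup>S (M1 \<Otimes>\<^sub>M M2) g \<le> (\<integral>\<^sup>+ x. \<integral>\<^sup>+ y. f (x, y) \<partial>M2 \<partial>M1)" .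
  qed
qed

lemma nn_pair_le_snd:
  assumes "sigma_finite_measure M2" "sigma_finite_measure M1"
  shows "(\<integral>\<^sup>+ z. f z \<partial>(M1 \<Otimes>\<^sub>M M2)) \<le> (\<integral>\<^sup>+ y. \<integral>\<^sup>+ x. f (x, y) \<partial>M1 \<partial>M2)"
proof -
  interpret M2: sigma_finite_measure M2 by fact
  interpret M1: sigma_finite_measure M1 by fact
  interpret P: pair_sigma_finite M1 M2 by standard
  show ?thesis
    unfolding nn_integral_def[of "M1 \<Otimes>\<^sub>M M2"]
  proof (rule SUP_least, clarify)
    fix g assume g: "simple_function (M1 \<Otimes>\<^sub>M M2) g" "g \<le> f"
    have "integral\<^sup>S (M1 \<Otimes>\<^sub>M M2) g = integral\<^sup>N (M1 \<Otimes>\<^sub>M M2) g"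
      using g(1) by (simp add: nn_integral_eq_simple_integral)
    also have "\<dots> = (\<integral>\<^sup>+ y. \<integral>\<^sup>+ x. g (x, y) \<partial>M1 \<partial>M2)"
      using g(1) by (intro P.nn_integral_snd[symmetric] borel_measurable_simple_function)
    also have "\<dots> \<le> (\<integral>\<^sup>+ y. \<integral>\<^sup>+ x. f (x, y) \<partial>M1 \<partial>M2)"
      using g(2) by (intro nn_integral_mono) (auto simp: le_fun_def)
    finally show "integral\<^sup>S (M1 \<Otimes>\<^sub>M M2) g \<le> (\<integral>\<^sup>+ y. \<integral>\<^sup>+ x. f (x, y) \<partial>M1 \<partial>M2)" .
  qed
qed

lemma norm_sq_Basis: "(norm x)\<^sup>2 = (\<Sum>b\<in>Basis. (x \<bullet> b)\<^sup>2)" for x :: "'a::euclidean_space"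
  unfolding power2_norm_eq_inner by (subst euclidean_inner) (simp add: power2_eq_square)

lemma gauss_density_prod:
  fixes H :: "complex^'m::finite^'m"
  shows "exp (- (norm H)\<^sup>2) / pi ^ (CARD('m) * CARD('m))
      = (\<Prod>b\<in>Basis. exp (- (1::real) * (H \<bullet> b - 0)\<^sup>2) / sqrt pi)"
proof -
  have "(\<Prod>b\<in>(Basis::(complex^'m^'m) set). exp (- (1::real) * (H \<bullet> b - 0)\<^sup>2) / sqrt pi)
      = (\<Prod>b\<in>(Basis::(complex^'m^'m) set). exp (- (H \<bullet> b)\<^sup>2)) / sqrt pi ^ card (Basis::(complex^'m^'m) set)"
    by (simp add: prod_dividef)
  also have "(\<Prod>b\<in>(Basis::(complex^'m^'m) set). exp (- (H \<bullet> b)\<^sup>2)) = exp (- (norm H)\<^sup>2)"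
    by (simp add: norm_sq_Basis exp_sum sum_negf[symmetric])
  also have "sqrt pi ^ card (Basis::(complex^'m^'m) set) = pi ^ (CARD('m) * CARD('m))"
  proof -
    have e: "CARD('m) * (CARD('m) * 2) = 2 * (CARD('m) * CARD('m))" by simp
    have "sqrt pi ^ (CARD('m) * (CARD('m) * 2)) = (sqrt pi ^ 2) ^ (CARD('m) * CARD('m))"
      unfolding e power_mult ..
    then show ?thesis by simp
  qed
  finally show ?thesis by simp
qed

lemma prob_space_cgauss: "prob_space (cgauss_mat :: (complex^'m::finite^'m) measure)"
proof
  have "emeasure (cgauss_mat :: (complex^'m::finite^'m) measure) (space cgauss_mat)
      = (\<integral>\<^sup>+ H. ennreal (\<Prod>b\<in>Basis. exp (- (1::real) * (H \<bullet> b - 0)\<^sup>2) / sqrt pi) \<partial>(lborel :: (complex^'m^'m) measure))"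
    unfolding cgauss_mat_def by (simp add: emeasure_density gauss_density_prod)
  also have "\<dots> = (\<integral>\<^sup>+ H. (\<Prod>b\<in>Basis. ennreal (exp (- (1::real) * (H \<bullet> b - 0)\<^sup>2) / sqrt pi)) \<partial>(lborel :: (complex^'m^'m) measure))"
    by (simp add: prod_ennreal)
  also have "\<dots> = (\<Prod>b\<in>(Basis :: (complex^'m^'m) set). (\<integral>\<^sup>+ t. ennreal (exp (- (1::real) * (t - 0)\<^sup>2) / sqrt pi) \<partial>lborel))"
    by (rule nn_integral_lborel_prod) auto
  also have "\<dots> = 1"
  proof (intro prod.neutral ballI)
    fix b :: "complex^'m^'m"
    have "(\<integral>\<^sup>+ t. ennreal (exp (- (1::real) * (t - 0)\<^sup>2) / sqrt pi) \<partial>lborel)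
        = (\<integral>\<^sup>+ t. ennreal (exp (- (1::real) * (t - 0)\<^sup>2)) * ennreal (1 / sqrt pi) \<partial>lborel)"
      by (intro nn_integral_cong) (simp add: ennreal_mult[symmetric])
    also have "\<dots> = ennreal (sqrt (pi / 1)) * ennreal (1 / sqrt pi)"
      by (simp add: nn_integral_multc gauss1d[of 1 0, simplified] del: mult_minus_left)
    also have "\<dots> = 1" by (simp add: ennreal_mult[symmetric])
    finally show "(\<integral>\<^sup>+ t. ennreal (exp (- (1::real) * (t - 0)\<^sup>2) / sqrt pi) \<partial>lborel) = 1" .
  qed
  finally show "emeasure (cgauss_mat :: (complex^'m::finite^'m) measure) (space cgauss_mat) = 1" .
qed


definition colB :: "'m::finite \<Rightarrow> (complex^'m^'m) set" where
  "colB l = {b\<in>Basis. \<forall>i j. j \<noteq> l \<longrightarrow> b$i$j = 0}"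

lemma Basis_mat_iff:
  "(b \<in> (Basis :: (complex^'m::finite^'m) set)) \<longleftrightarrow> (\<exists>i j w. w \<in> {1, \<i>} \<and> b = axis i (axis j w))"
  by (auto simp: Basis_vec_def Basis_complex_def)

lemma colB_eq: "colB l = (\<lambda>(i,w). axis i (axis l w)) ` (UNIV \<times> {1, \<i>})"
proof -
  have "b \<in> colB l \<longleftrightarrow> b \<in> (\<lambda>(i,w). axis i (axis l w)) ` (UNIV \<times> {1, \<i>})" for b
  proof
    assume "b \<in> colB l"
    then obtain i j w where b: "w \<in> {1, \<i>}" "b = axis i (axis j w)" and z: "\<forall>i j. j \<noteq> l \<longrightarrow> b$i$j = 0"
      unfolding colB_def Basis_mat_iff by blast
    have "j = l"
    proof (rule ccontr)
      assume "j \<noteq> l"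
      then have "b$i$j = 0" using z by blast
      then show False using b by auto
    qed
    then show "b \<in> (\<lambda>(i,w). axis i (axis l w)) ` (UNIV \<times> {1, \<i>})" using b by auto
  next
    assume "b \<in> (\<lambda>(i,w). axis i (axis l w)) ` (UNIV \<times> {1, \<i>})"
    then obtain i w where b: "w \<in> {1, \<i>}" "b = axis i (axis l w)" by auto
    have "b \<in> Basis" unfolding Basis_mat_iff using b by blast
    moreover have "b$i'$j = 0" if "j \<noteq> l" for i' j
      using b that by (simp add: axis_def)
    ultimately show "b \<in> colB l" unfolding colB_def by blast
  qed
  then show ?thesis by blast
qed

lemma card_colB: "card (colB (l::'m::finite)) = 2 * CARD('m)"
proof -
  have "inj_on (\<lambda>(i,w). axis i (axis l w) :: complex^'m^'m) (UNIV \<times> {1, \<i>})"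
  proof (rule inj_onI, clarify)
    fix i w i' w' assume w: "w \<in> {1, \<i>}" "w' \<in> {1, \<i>}"
      and eq: "(axis i (axis l w) :: complex^'m^'m) = axis i' (axis l w')"
    have "axis l w $ l \<noteq> 0" using w(1) by auto
    then have nz: "axis l w \<noteq> 0" by (metis zero_index)
    from eq nz have "axis l w = axis l w' \<and> i = i'" unfolding axis_eq_axis by blast
    then show "i = i' \<and> w = w'" unfolding axis_eq_axis using nz by auto
  qed
  then have "card (colB l) = card ((UNIV::'m set) \<times> {1::complex, \<i>})"
    unfolding colB_eq by (rule card_image)
  also have "card {1::complex, \<i>} = 2" by simp
  then have "card ((UNIV::'m set) \<times> {1::complex, \<i>}) = 2 * CARD('m)" by (simp add: card_cartesian_product)
  finally show ?thesis .
qed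

lemma colB_sub: "colB l \<subseteq> Basis" by (auto simp: colB_def)

lemma inner_rest_zero:
  fixes Z :: "complex^'m::finite^'m"
  assumes "b \<in> Basis - colB l" "\<And>i j. j \<noteq> l \<Longrightarrow> Z$i$j = 0"
  shows "Z \<bullet> b = 0"
proof -
  have "b \<in> Basis" using assms(1) by blast
  then obtain i j w where b: "w \<in> {1, \<i>}" "b = axis i (axis j w)"
    unfolding Basis_mat_iff by blast
  have "j \<noteq> l"
  proof
    assume "j = l"
    then have "b \<in> colB l" unfolding colB_eq using b
      by (intro image_eqI[where x="(i,w)"]) auto
    then show False using assms(1) by blast
  qed
  have "Z \<bullet> b = (Z$i$j) \<bullet> w" unfolding b(2) by (simp add: inner_axis)
  also have "Z$i$j = 0" using assms(2) \<open>j \<noteq> l\<close> by blast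
  finally show ?thesis by simp
qed

lemma inner_sum_sub_Basis:
  fixes c :: "'a::euclidean_space \<Rightarrow> real"
  assumes "S \<subseteq> Basis" "b \<in> Basis"
  shows "(\<Sum>b'\<in>S. c b' *\<^sub>R b') \<bullet> b = (if b \<in> S then c b else 0)"
proof -
  have fin: "finite S" using assms(1) by (rule finite_subset) simp
  have "(\<Sum>b'\<in>S. c b' *\<^sub>R b') \<bullet> b = (\<Sum>b'\<in>S. c b' * (b' \<bullet> b))"
    by (simp only: inner_sum_left inner_scaleR_left)
  also have "\<dots> = (\<Sum>b'\<in>S. if b' = b then c b else 0)"
  proof (rule sum.cong)
    fix b' assume "b' \<in> S"
    then have "b' \<in> Basis" using assms(1) by blast
    then show "c b' * (b' \<bullet> b) = (if b' = b then c b else 0)"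
      using assms(2) by (simp add: inner_Basis)
  qed simp
  also have "\<dots> = (if b \<in> S then c b else 0)"
    using fin by (simp add: sum.delta')
  finally show ?thesis .
qed

lemma colB_sum_nth:
  fixes c :: "complex^'m::finite^'m \<Rightarrow> real"
  assumes "j \<noteq> l"
  shows "(\<Sum>b\<in>colB l. c b *\<^sub>R b) $ i $ j = 0"
  using assms by (auto simp: colB_def intro!: sum.neutral)

lemma norm_sq_mat:
  fixes X :: "complex^'n::finite^'m::finite"
  shows "(norm X)\<^sup>2 = (\<Sum>i\<in>UNIV. \<Sum>j\<in>UNIV. (cmod (X$i$j))\<^sup>2)"
  unfolding norm_vec_def L2_set_def
  by (simp add: sum_nonneg)


lemma meas_F:
  fixes v k :: "complex^'m::finite"
  shows "(\<lambda>H::complex^'m^'m. exp (- a * (\<Sum>i\<in>UNIV. (cmod ((H *v v)$i + k$i))\<^sup>2))) \<in> borel_measurable borel"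
proof (rule borel_measurable_continuous_onI)
  have cont: "continuous_on UNIV (\<lambda>H::complex^'m^'m. H *v v)"
    unfolding matrix_vector_mult_def by (intro continuous_intros)
  then show "continuous_on UNIV (\<lambda>H::complex^'m^'m. exp (- a * (\<Sum>i\<in>UNIV. (cmod ((H *v v)$i + k$i))\<^sup>2)))"
    by (intro continuous_intros cont)
qed

lemma meas_psi: "(\<lambda>f. \<Sum>b\<in>Basis. f b *\<^sub>R b :: 'a::euclidean_space) \<in> borel_measurable (Pi\<^sub>M Basis (\<lambda>_. lborel))"
  by measurable

lemma core_alg:
  fixes x y :: "complex^'m::finite^'m \<Rightarrow> real" and v k :: "complex^'m" and l :: 'm
  assumes vl: "v$l \<noteq> 0"
  defines "R \<equiv> (\<Sum>b\<in>Basis - colB l. x b *\<^sub>R b)" and "C \<equiv> (\<Sum>b\<in>colB l. y b *\<^sub>R b)"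
  defines "Z \<equiv> (\<chi> i j. if j = l then - ((R *v v)$i + k$i) / v$l else 0) :: complex^'m^'m"
  shows "(\<Sum>i\<in>UNIV. (cmod (((R + C) *v v)$i + k$i))\<^sup>2)
       = (cmod (v$l))\<^sup>2 * (\<Sum>b\<in>colB l. (y b - Z \<bullet> b)\<^sup>2)"
proof -
  have C0: "C$i$j = 0" if "j \<noteq> l" for i j
    unfolding C_def using that by (rule colB_sum_nth)
  have Z0: "Z$i$j = 0" if "j \<noteq> l" for i j
    unfolding Z_def using that by simp
  have CZ0: "(C - Z)$i$j = 0" if "j \<noteq> l" for i j
    using C0[OF that] Z0[OF that] by simp
  have Cv: "(C *v v)$i = C$i$l * v$l" for i
  proof -
    have "(C *v v)$i = (\<Sum>j\<in>UNIV. C$i$j * v$j)" by (simp add: matrix_vector_mult_def)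
    also have "\<dots> = (\<Sum>j\<in>UNIV. if j = l then C$i$l * v$l else 0)"
      by (intro sum.cong) (auto simp: C0)
    also have "\<dots> = C$i$l * v$l" by simp
    finally show ?thesis .
  qed
  have step1: "((R + C) *v v)$i + k$i = v$l * ((C - Z)$i$l)" for i
  proof -
    have "((R + C) *v v)$i = (R *v v)$i + (C *v v)$i"
      by (simp add: matrix_vector_mult_def sum.distrib distrib_right)
    then show ?thesis using vl by (simp add: Cv Z_def field_simps)
  qed
  have "(\<Sum>i\<in>UNIV. (cmod (((R + C) *v v)$i + k$i))\<^sup>2)
      = (\<Sum>i\<in>UNIV. (cmod (v$l))\<^sup>2 * (cmod ((C - Z)$i$l))\<^sup>2)"
    by (simp add: step1 norm_mult power_mult_distrib)
  also have "\<dots> = (cmod (v$l))\<^sup>2 * (\<Sum>i\<in>UNIV. (cmod ((C - Z)$i$l))\<^sup>2)"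
    by (simp add: sum_distrib_left)
  also have "(\<Sum>i\<in>UNIV. (cmod ((C - Z)$i$l))\<^sup>2) = (norm (C - Z))\<^sup>2"
  proof -
    have "(\<Sum>j\<in>UNIV. (cmod ((C - Z)$i$j))\<^sup>2) = (cmod ((C - Z)$i$l))\<^sup>2" for i
    proof -
      have "(\<Sum>j\<in>UNIV. (cmod ((C - Z)$i$j))\<^sup>2) = (\<Sum>j\<in>UNIV. if j = l then (cmod ((C - Z)$i$l))\<^sup>2 else 0)"
        by (intro sum.cong) (auto simp: C0 Z0)
      then show ?thesis by simp
    qed
    then show ?thesis by (simp add: norm_sq_mat)
  qed
  also have "(norm (C - Z))\<^sup>2 = (\<Sum>b\<in>colB l. (y b - Z \<bullet> b)\<^sup>2)"
  proof -
    have fin: "finite (colB l)" "finite (Basis - colB l)"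
      by (rule finite_subset[OF colB_sub], simp) simp
    have BU: "(Basis :: (complex^'m^'m) set) = colB l \<union> (Basis - colB l)" using colB_sub by blast
    have "(norm (C - Z))\<^sup>2 = (\<Sum>b\<in>Basis. ((C - Z) \<bullet> b)\<^sup>2)" by (rule norm_sq_Basis)
    also have "\<dots> = (\<Sum>b\<in>colB l. ((C - Z) \<bullet> b)\<^sup>2) + (\<Sum>b\<in>Basis - colB l. ((C - Z) \<bullet> b)\<^sup>2)"
      by (subst BU, rule sum.union_disjoint) (use fin in auto)
    also have "(\<Sum>b\<in>Basis - colB l. ((C - Z) \<bullet> b)\<^sup>2) = 0"
    proof (intro sum.neutral ballI)
      fix b assume b: "b \<in> Basis - colB l"
      have "(C - Z) \<bullet> b = 0" by (rule inner_rest_zero[OF b CZ0])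
      then show "((C - Z) \<bullet> b)\<^sup>2 = 0" by simp
    qed
    also have "(\<Sum>b\<in>colB l. ((C - Z) \<bullet> b)\<^sup>2) = (\<Sum>b\<in>colB l. (y b - Z \<bullet> b)\<^sup>2)"
    proof (intro sum.cong refl)
      fix b assume b: "b \<in> colB l"
      then have "b \<in> Basis" using colB_sub by blast
      then have "C \<bullet> b = y b" unfolding C_def using b by (simp add: inner_sum_sub_Basis[OF colB_sub])
      then show "((C - Z) \<bullet> b)\<^sup>2 = (y b - Z \<bullet> b)\<^sup>2" by (simp add: inner_diff_left)
    qed
    finally show ?thesis by simp
  qed
  finally show ?thesis .
qed


lemma gauss1d':
  fixes a g :: real assumes a: "a > 0"
  shows "(\<integral>\<^sup>+ t. ennreal (exp (- a * (t - g)\<^sup>2) / sqrt pi) \<partial>lborel) = ennreal (1 / sqrt a)"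
proof -
  have "(\<integral>\<^sup>+ t. ennreal (exp (- a * (t - g)\<^sup>2) / sqrt pi) \<partial>lborel)
      = (\<integral>\<^sup>+ t. ennreal (exp (- a * (t - g)\<^sup>2)) * ennreal (1 / sqrt pi) \<partial>lborel)"
    by (intro nn_integral_cong) (simp add: ennreal_mult[symmetric])
  also have "\<dots> = ennreal (sqrt (pi / a)) * ennreal (1 / sqrt pi)"
    using gauss1d[OF a, of g] by (simp add: nn_integral_multc)
  also have "\<dots> = ennreal (sqrt (pi / a) * (1 / sqrt pi))" by (rule ennreal_mult[symmetric]) (use a in auto)
  also have "sqrt (pi / a) * (1 / sqrt pi) = 1 / sqrt a"
    using a by (simp add: real_sqrt_divide)
  finally show ?thesis .
qed

lemma core_gauss:
  fixes v k :: "complex^'m::finite" and l :: 'm and a :: real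
  assumes a: "a > 0" and vl: "v$l \<noteq> 0"
  shows "(\<integral>\<^sup>+ H. ennreal (exp (- a * (\<Sum>i\<in>UNIV. (cmod ((H *v v)$i + k$i))\<^sup>2))) \<partial>(cgauss_mat::(complex^'m^'m) measure))
     \<le> ennreal ((1 / (a * (cmod (v$l))\<^sup>2)) ^ CARD('m))"
proof -
  define \<alpha> where "\<alpha> = a * (cmod (v$l))\<^sup>2"
  have \<alpha>: "\<alpha> > 0" using a vl unfolding \<alpha>_def by simp
  define F where "F = (\<lambda>H::complex^'m^'m. exp (- a * (\<Sum>i\<in>UNIV. (cmod ((H *v v)$i + k$i))\<^sup>2)))"
  define g where "g = (\<lambda>H::complex^'m^'m. exp (- (norm H)\<^sup>2) / pi ^ (CARD('m) * CARD('m)))"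
  define Col where "Col = colB l"
  define Rest where "Rest = (Basis::(complex^'m^'m) set) - Col"
  define \<psi> where "\<psi> = (\<lambda>f. \<Sum>b\<in>Basis. f b *\<^sub>R b :: complex^'m^'m)"
  define G where "G = (\<lambda>f. ennreal (g (\<psi> f)) * ennreal (F (\<psi> f)))"
  define Zf where "Zf = (\<lambda>x. (\<chi> i j. if j = l then - (((\<Sum>b\<in>Basis - colB l. x b *\<^sub>R b) *v v)$i + k$i) / v$l else 0) :: complex^'m^'m)"
  define h where "h = (\<lambda>x b t. exp (- \<alpha> * (t - Zf x \<bullet> b)\<^sup>2) / sqrt pi)"
  define h0 where "h0 = (\<lambda>t::real. exp (- 1 * (t - 0)\<^sup>2) / sqrt pi)"
  interpret P: product_sigma_finite "\<lambda>_::complex^'m^'m. lborel::real measure" by standard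
  have mF: "F \<in> borel_measurable borel" unfolding F_def by (rule meas_F)
  have mg: "g \<in> borel_measurable borel" unfolding g_def by measurable
  have finC: "finite Col" unfolding Col_def by (rule finite_subset[OF colB_sub]) simp
  have finR: "finite Rest" unfolding Rest_def by simp
  have disj: "Rest \<inter> Col = {}" unfolding Rest_def by blast
  have BU: "(Basis::(complex^'m^'m) set) = Rest \<union> Col" unfolding Rest_def Col_def using colB_sub by blast
  have mG: "G \<in> borel_measurable (Pi\<^sub>M Basis (\<lambda>_. lborel))"
    unfolding G_def using meas_psi[where 'a="complex^'m^'m"] mF mg unfolding \<psi>_def by measurable
  have "(\<integral>\<^sup>+ H. ennreal (F H) \<partial>(cgauss_mat::(complex^'m^'m) measure))
      = (\<integral>\<^sup>+ H. ennreal (g H) * ennreal (F H) \<partial>lborel)"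
    unfolding cgauss_mat_def g_def using mF by (subst nn_integral_density) auto
  also have "\<dots> = (\<integral>\<^sup>+ H. ennreal (g H) * ennreal (F H) \<partial>(distr (Pi\<^sub>M Basis (\<lambda>_. lborel)) borel \<psi>))"
    unfolding \<psi>_def by (simp only: lborel_eq[where 'a="complex^'m^'m", symmetric])
  also have "\<dots> = (\<integral>\<^sup>+ f. G f \<partial>(Pi\<^sub>M Basis (\<lambda>_. lborel)))"
    unfolding G_def using mF mg meas_psi[where 'a="complex^'m^'m"] unfolding \<psi>_def
    by (subst nn_integral_distr) auto
  also have "\<dots> = (\<integral>\<^sup>+ x. \<integral>\<^sup>+ y. G (merge Rest Col (x, y)) \<partial>(Pi\<^sub>M Col (\<lambda>_. lborel)) \<partial>(Pi\<^sub>M Rest (\<lambda>_. lborel)))"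
    using P.product_nn_integral_fold[OF disj finR finC, of G] mG unfolding BU by simp
  also have "\<dots> \<le> (\<integral>\<^sup>+ x. \<integral>\<^sup>+ y. (\<Prod>b\<in>Rest. ennreal (h0 (x b))) * (\<Prod>b\<in>Col. ennreal (h x b (y b))) \<partial>(Pi\<^sub>M Col (\<lambda>_. lborel)) \<partial>(Pi\<^sub>M Rest (\<lambda>_. lborel)))"
  proof (intro nn_integral_mono)
    fix x y :: "complex^'m^'m \<Rightarrow> real"
    show "G (merge Rest Col (x, y)) \<le> (\<Prod>b\<in>Rest. ennreal (h0 (x b))) * (\<Prod>b\<in>Col. ennreal (h x b (y b)))"
    proof -
      define m where "m = merge Rest Col (x, y)"
      define R where "R = (\<Sum>b\<in>Basis - colB l. x b *\<^sub>R b :: complex^'m^'m)"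
      define C where "C = (\<Sum>b\<in>colB l. y b *\<^sub>R b :: complex^'m^'m)"
      have mR: "m b = x b" if "b \<in> Rest" for b using that disj unfolding m_def by simp
      have mC: "m b = y b" if "b \<in> Col" for b using that disj unfolding m_def by simp
      have psi: "\<psi> m = R + C"
      proof -
        have "\<psi> m = (\<Sum>b\<in>Rest. m b *\<^sub>R b) + (\<Sum>b\<in>Col. m b *\<^sub>R b)"
          unfolding \<psi>_def BU by (rule sum.union_disjoint[OF finR finC disj])
        also have "(\<Sum>b\<in>Rest. m b *\<^sub>R b) = R"
          unfolding R_def Rest_def[symmetric] Col_def[symmetric] by (intro sum.cong refl) (simp add: mR)
        also have "(\<Sum>b\<in>Col. m b *\<^sub>R b) = C"
          unfolding C_def Col_def[symmetric] by (intro sum.cong refl) (simp add: mC)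
        finally show ?thesis .
      qed
      have inn: "\<psi> m \<bullet> b = m b" if "b \<in> Basis" for b
        unfolding \<psi>_def using inner_sum_sub_Basis[of Basis b m] that by simp
      have gH: "g (\<psi> m) \<le> (\<Prod>b\<in>Rest. h0 (x b)) * (\<Prod>b\<in>Col. 1 / sqrt pi)"
      proof -
        have "g (\<psi> m) = (\<Prod>b\<in>Basis. exp (- (1::real) * (\<psi> m \<bullet> b - 0)\<^sup>2) / sqrt pi)"
          unfolding g_def by (rule gauss_density_prod)
        also have "\<dots> = (\<Prod>b\<in>Rest. exp (- (1::real) * (\<psi> m \<bullet> b - 0)\<^sup>2) / sqrt pi)
             * (\<Prod>b\<in>Col. exp (- (1::real) * (\<psi> m \<bullet> b - 0)\<^sup>2) / sqrt pi)"
          unfolding BU by (rule prod.union_disjoint[OF finR finC disj])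
        also have "(\<Prod>b\<in>Rest. exp (- (1::real) * (\<psi> m \<bullet> b - 0)\<^sup>2) / sqrt pi) = (\<Prod>b\<in>Rest. h0 (x b))"
        proof (intro prod.cong refl)
          fix b assume b: "b \<in> Rest"
          then have "b \<in> Basis" using BU by blast
          then show "exp (- (1::real) * (\<psi> m \<bullet> b - 0)\<^sup>2) / sqrt pi = h0 (x b)"
            using b by (simp add: inn mR h0_def)
        qed
        also have "(\<Prod>b\<in>Col. exp (- (1::real) * (\<psi> m \<bullet> b - 0)\<^sup>2) / sqrt pi) \<le> (\<Prod>b\<in>Col. 1 / sqrt pi)"
          by (intro prod_mono) (auto simp: divide_right_mono)
        finally show ?thesis
          by (simp add: h0_def prod_nonneg mult_left_mono)
      qed
      have FH: "F (\<psi> m) = (\<Prod>b\<in>Col. exp (- \<alpha> * (y b - Zf x \<bullet> b)\<^sup>2))"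
      proof -
        have "(\<Sum>i\<in>UNIV. (cmod (((R + C) *v v)$i + k$i))\<^sup>2)
            = (cmod (v$l))\<^sup>2 * (\<Sum>b\<in>colB l. (y b - Zf x \<bullet> b)\<^sup>2)"
          unfolding R_def C_def Zf_def by (rule core_alg[OF vl])
        then have "F (\<psi> m) = exp (\<Sum>b\<in>Col. - \<alpha> * (y b - Zf x \<bullet> b)\<^sup>2)"
          unfolding F_def psi \<alpha>_def Col_def by (simp add: sum_distrib_left sum_negf mult.assoc)
        then show ?thesis by (simp add: exp_sum[OF finC])
      qed
      have "g (\<psi> m) * F (\<psi> m) \<le> (\<Prod>b\<in>Rest. h0 (x b)) * (\<Prod>b\<in>Col. 1 / sqrt pi) * F (\<psi> m)"
        using gH by (intro mult_right_mono) (auto simp: F_def)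
      also have "\<dots> = (\<Prod>b\<in>Rest. h0 (x b)) * ((\<Prod>b\<in>Col. 1 / sqrt pi) * (\<Prod>b\<in>Col. exp (- \<alpha> * (y b - Zf x \<bullet> b)\<^sup>2)))"
        by (simp only: FH mult.assoc)
      also have "(\<Prod>b\<in>Col. 1 / sqrt pi) * (\<Prod>b\<in>Col. exp (- \<alpha> * (y b - Zf x \<bullet> b)\<^sup>2)) = (\<Prod>b\<in>Col. h x b (y b))"
        unfolding prod.distrib[symmetric] h_def by (intro prod.cong) auto
      finally have le: "g (\<psi> m) * F (\<psi> m) \<le> (\<Prod>b\<in>Rest. h0 (x b)) * (\<Prod>b\<in>Col. h x b (y b))" .
      have "G m = ennreal (g (\<psi> m) * F (\<psi> m))"
        unfolding G_def by (rule ennreal_mult[symmetric]) (auto simp: g_def F_def)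
      also have "\<dots> \<le> ennreal ((\<Prod>b\<in>Rest. h0 (x b)) * (\<Prod>b\<in>Col. h x b (y b)))"
        using le by (rule ennreal_leI)
      also have "\<dots> = (\<Prod>b\<in>Rest. ennreal (h0 (x b))) * (\<Prod>b\<in>Col. ennreal (h x b (y b)))"
        by (simp add: ennreal_mult prod_nonneg prod_ennreal h0_def h_def)
      finally show ?thesis unfolding m_def .
    qed
  qed
  also have "\<dots> = (\<integral>\<^sup>+ x. (\<Prod>b\<in>Rest. ennreal (h0 (x b))) * ennreal (1 / sqrt \<alpha>) ^ card Col \<partial>(Pi\<^sub>M Rest (\<lambda>_. lborel)))"
  proof (intro nn_integral_cong)
    fix x :: "complex^'m^'m \<Rightarrow> real"
    have mh: "(\<lambda>y. \<Prod>b\<in>Col. ennreal (h x b (y b))) \<in> borel_measurable (Pi\<^sub>M Col (\<lambda>_. lborel))"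
      unfolding h_def by measurable
    have "(\<integral>\<^sup>+ y. (\<Prod>b\<in>Col. ennreal (h x b (y b))) \<partial>(Pi\<^sub>M Col (\<lambda>_. lborel)))
        = (\<Prod>b\<in>Col. (\<integral>\<^sup>+ t. ennreal (h x b t) \<partial>lborel))"
      using finC by (intro P.product_nn_integral_prod) (auto simp: h_def)
    also have "\<dots> = (\<Prod>b\<in>Col. ennreal (1 / sqrt \<alpha>))"
      using gauss1d'[OF \<alpha>] by (intro prod.cong refl) (simp add: h_def)
    finally show "(\<integral>\<^sup>+ y. (\<Prod>b\<in>Rest. ennreal (h0 (x b))) * (\<Prod>b\<in>Col. ennreal (h x b (y b))) \<partial>(Pi\<^sub>M Col (\<lambda>_. lborel)))
        = (\<Prod>b\<in>Rest. ennreal (h0 (x b))) * ennreal (1 / sqrt \<alpha>) ^ card Col"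
      using mh by (simp add: nn_integral_cmult)
  qed
  also have "\<dots> = (\<Prod>b\<in>Rest. (\<integral>\<^sup>+ t. ennreal (h0 t) \<partial>lborel)) * ennreal (1 / sqrt \<alpha>) ^ card Col"
  proof -
    have mP: "(\<lambda>x. \<Prod>b\<in>Rest. ennreal (h0 (x b))) \<in> borel_measurable (Pi\<^sub>M Rest (\<lambda>_. lborel))"
      unfolding h0_def by measurable
    have pr: "(\<integral>\<^sup>+ x. (\<Prod>b\<in>Rest. ennreal (h0 (x b))) \<partial>(Pi\<^sub>M Rest (\<lambda>_. lborel)))
        = (\<Prod>b\<in>Rest. \<integral>\<^sup>+ t. ennreal (h0 t) \<partial>lborel)"
      using finR by (intro P.product_nn_integral_prod) (auto simp: h0_def)
    show ?thesis using mP by (simp add: nn_integral_multc pr)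
  qed
  also have "\<dots> = ennreal (1 / sqrt \<alpha>) ^ card Col"
    by (simp add: h0_def gauss1d'[of 1 0, simplified] del: mult_minus_left)
  also have "\<dots> = ennreal ((1 / \<alpha>) ^ CARD('m))"
  proof -
    have "ennreal (1 / sqrt \<alpha>) ^ card Col = ennreal ((1 / sqrt \<alpha>) ^ (2 * CARD('m)))"
      unfolding Col_def card_colB by (rule ennreal_power) (use \<alpha> in simp)
    also have "(1 / sqrt \<alpha>) ^ (2 * CARD('m)) = (1 / \<alpha>) ^ CARD('m)"
      using \<alpha> by (simp add: power_mult power_divide)
    finally show ?thesis .
  qed
  finally show ?thesis unfolding F_def \<alpha>_def .
qed


lemma rank_right_inv:
  fixes D :: "'a::field^'n::finite^'m::finite"
  assumes rk: "rank D = CARD('m)"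
  shows "\<exists>R. D ** R = mat 1"
proof -
  have "\<forall>c. (\<Sum>i\<in>UNIV. c i *s row i D) = 0 \<longrightarrow> (\<forall>i. c i = 0)"
  proof (intro allI impI)
    fix c i0 assume S: "(\<Sum>i\<in>UNIV. c i *s row i D) = 0"
    show "c i0 = 0"
    proof (rule ccontr)
    assume ci: "c i0 \<noteq> 0"
    define W where "W = (\<lambda>i. row i D) ` (UNIV - {i0})"
    have "c i0 *s row i0 D + (\<Sum>i\<in>UNIV - {i0}. c i *s row i D) = 0"
      using S by (simp add: sum.remove[of UNIV i0])
    then have r0: "row i0 D = (- inverse (c i0)) *s (\<Sum>i\<in>UNIV - {i0}. c i *s row i D)"
      using ci by (simp add: vector_smult_assoc add_eq_0_iff2 vec_eq_iff field_simps)
    have spW: "row i D \<in> vec.span W" if "i \<noteq> i0" for i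
      using that unfolding W_def by (intro vec.span_base) auto
    have "row i0 D \<in> vec.span W"
      unfolding r0 by (intro vec.span_scale vec.span_sum) (auto intro: vec.span_scale spW)
    note r0span = this
    have sub: "rows D \<subseteq> vec.span W"
    proof
      fix r assume "r \<in> rows D"
      then obtain i where ri: "r = row i D" unfolding rows_def by blast
      show "r \<in> vec.span W"
      proof (cases "i = i0")
        case True then show ?thesis using ri r0span by simp
      next
        case False then show ?thesis using ri spW by simp
      qed
    qed
    have "vec.dim (rows D) \<le> card W"
      using sub by (rule vec.dim_le_card) (simp add: W_def)
    also have "card W \<le> card (UNIV - {i0::'m})" unfolding W_def by (rule card_image_le) simp
    also have "\<dots> < CARD('m)" by (simp add: card_Diff_singleton)
    finally have "vec.dim (rows D) < CARD('m)" .
    then show False using rk unfolding row_rank_def_gen by simp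
  qed
  qed
  then show ?thesis by (simp add: matrix_right_invertible_independent_rows)
qed

lemma trace_conj: "Re (trace (A ** conj_transpose A)) = (norm A)\<^sup>2" for A :: "complex^'m::finite^'m"
proof -
  have "(A ** conj_transpose A)$i$i = (\<Sum>k\<in>UNIV. A$i$k * cnj (A$i$k))" for i
    by (simp add: matrix_matrix_mult_def conj_transpose_def)
  then have "Re (trace (A ** conj_transpose A)) = (\<Sum>i\<in>UNIV. \<Sum>k\<in>UNIV. (cmod (A$i$k))\<^sup>2)"
    by (simp add: trace_def Re_sum complex_mult_cnj cmod_power2)
  then show ?thesis by (simp add: norm_sq_mat)
qed

lemma precoder_norm:
  fixes H :: "complex^'m::finite^'m"
  assumes "invertible H"
  shows "norm (precoder H) = 1"
proof -
  have inv: "H ** matrix_inv H = mat 1"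
    using assms unfolding invertible_def matrix_inv_def by (rule someI_ex[THEN conjunct1])
  define A where "A = cinv H"
  have A: "A = matrix_inv H" using assms by (simp add: A_def cinv_def)
  have "A \<noteq> 0"
  proof
    assume "A = 0"
    then have "(mat 1 :: complex^'m^'m) = 0" using inv A by simp
    then have "(mat 1 :: complex^'m^'m) $ undefined $ undefined = 0" by simp
    then show False by (simp add: mat_def)
  qed
  then have nA: "norm A > 0" by simp
  have "precoder H = (1 / norm A) *\<^sub>R A"
    unfolding precoder_def A_def[symmetric] trace_conj using nA by simp
  then show ?thesis using nA by simp
qed

lemma big_entry:
  fixes W :: "complex^'m::finite^'m"
  assumes "norm W = 1"
  shows "\<exists>l j. (cmod (W$l$j))\<^sup>2 \<ge> 1 / (real CARD('m))\<^sup>2"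
proof (rule ccontr)
  assume "\<not> ?thesis"
  then have lt: "(cmod (W$l$j))\<^sup>2 < 1 / (real CARD('m))\<^sup>2" for l j using not_le by blast
  have "1 = (norm W)\<^sup>2" using assms by simp
  also have "\<dots> = (\<Sum>l\<in>UNIV. \<Sum>j\<in>UNIV. (cmod (W$l$j))\<^sup>2)" by (rule norm_sq_mat)
  also have "\<dots> < (\<Sum>l\<in>(UNIV::'m set). \<Sum>j\<in>(UNIV::'m set). 1 / (real CARD('m))\<^sup>2)"
    by (intro sum_strict_mono) (auto intro: lt)
  also have "\<dots> = 1" by (simp add: power2_eq_square)
  finally show False by simp
qed

lemma norm_sq_vec: "(norm x)\<^sup>2 = (\<Sum>i\<in>UNIV. (norm (x$i))\<^sup>2)" for x :: "'a::real_normed_vector^'n::finite"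
  by (simp only: norm_vec_def[of x] L2_set_def) (simp add: sum_nonneg)

lemma cs_rows:
  fixes X :: "complex^'t::finite^'m::finite" and u :: "complex^'t"
  shows "(\<Sum>i\<in>UNIV. (cmod ((X *v u)$i))\<^sup>2) \<le> (norm X)\<^sup>2 * (norm u)\<^sup>2"
proof -
  have "cmod ((X *v u)$i) \<le> norm (X$i) * norm u" for i
  proof -
    have "cmod ((X *v u)$i) = cmod (\<Sum>t\<in>UNIV. X$i$t * u$t)" by (simp add: matrix_vector_mult_def)
    also have "\<dots> \<le> (\<Sum>t\<in>UNIV. \<bar>cmod (X$i$t)\<bar> * \<bar>cmod (u$t)\<bar>)"
      by (rule order_trans[OF norm_sum]) (simp add: norm_mult)
    also have "\<dots> \<le> L2_set (\<lambda>t. cmod (X$i$t)) UNIV * L2_set (\<lambda>t. cmod (u$t)) UNIV"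
      by (rule L2_set_mult_ineq)
    also have "\<dots> = norm (X$i) * norm u" by (simp add: norm_vec_def)
    finally show ?thesis .
  qed
  then have "(cmod ((X *v u)$i))\<^sup>2 \<le> (norm (X$i))\<^sup>2 * (norm u)\<^sup>2" for i
    by (metis norm_ge_zero power_mono power_mult_distrib)
  then have "(\<Sum>i\<in>UNIV. (cmod ((X *v u)$i))\<^sup>2) \<le> (\<Sum>i\<in>UNIV. (norm (X$i))\<^sup>2 * (norm u)\<^sup>2)"
    by (intro sum_mono)
  also have "\<dots> = (norm X)\<^sup>2 * (norm u)\<^sup>2"
    by (simp add: sum_distrib_right[symmetric] norm_sq_vec[of X])
  finally show ?thesis .
qed

lemma pw_bound:
  fixes H W :: "complex^'m::finite^'m" and D K :: "complex^'t::finite^'m" and R :: "complex^'m^'t"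
    and c s :: real and j :: 'm
  assumes DR: "D ** R = mat 1" and s: "s \<ge> 0"
  shows "exp (- s * (norm (c *\<^sub>R (H ** W ** D) + K))\<^sup>2)
     \<le> exp (- (s / (norm R)\<^sup>2) * (\<Sum>i\<in>UNIV. (cmod ((H *v (\<chi> l. complex_of_real c * W$l$j))$i + (K *v column j R)$i))\<^sup>2))"
proof -
  define X where "X = c *\<^sub>R (H ** W ** D) + K"
  define u where "u = column j R"
  define v where "v = (\<chi> l. complex_of_real c * W$l$j)"
  have Du: "D *v u = axis j 1"
  proof -
    have "D *v u = column j (D ** R)"
      by (simp add: u_def vec_eq_iff matrix_vector_mult_def matrix_matrix_mult_def column_def)
    also have "\<dots> = axis j 1" by (simp add: DR vec_eq_iff column_def mat_def axis_def)
    finally show ?thesis .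
  qed
  have "(H ** W ** D) *v u = H *v (W *v axis j 1)"
    by (simp add: matrix_vector_mul_assoc[symmetric] Du)
  then have "((H ** W ** D) *v u)$i = (\<Sum>k\<in>UNIV. H$i$k * W$k$j)" for i
    by (simp add: matrix_vector_mult_def axis_def if_distrib cong: if_cong)
  note HWD = this
  have Xu: "(X *v u)$i = (H *v v)$i + (K *v u)$i" for i
  proof -
    have "(X *v u)$i = c *\<^sub>R ((H ** W ** D) *v u)$i + (K *v u)$i"
      by (simp add: X_def matrix_vector_mult_def sum.distrib distrib_right scaleR_sum_right)
    also have "c *\<^sub>R ((H ** W ** D) *v u)$i = (H *v v)$i"
      unfolding HWD by (simp add: v_def matrix_vector_mult_def scaleR_conv_of_real sum_distrib_left mult.left_commute)
    finally show ?thesis .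
  qed
  have Rnz: "R \<noteq> 0"
  proof
    assume "R = 0"
    then have "(mat 1 :: complex^'m^'m) = 0" using DR by simp
    then have "(mat 1 :: complex^'m^'m) $ undefined $ undefined = 0" by simp
    then show False by (simp add: mat_def)
  qed
  then have rho: "(norm R)\<^sup>2 > 0" by simp
  have nu: "(norm u)\<^sup>2 \<le> (norm R)\<^sup>2"
  proof -
    have "(norm u)\<^sup>2 = (\<Sum>t\<in>UNIV. (cmod (R$t$j))\<^sup>2)"
      by (simp add: norm_sq_vec u_def column_def)
    also have "\<dots> \<le> (\<Sum>t\<in>UNIV. \<Sum>j'\<in>UNIV. (cmod (R$t$j'))\<^sup>2)"
      by (intro sum_mono member_le_sum) auto
    also have "\<dots> = (norm R)\<^sup>2" by (simp add: norm_sq_mat)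
    finally show ?thesis .
  qed
  define S where "S = (\<Sum>i\<in>UNIV. (cmod ((H *v v)$i + (K *v u)$i))\<^sup>2)"
  have "S \<le> (norm X)\<^sup>2 * (norm u)\<^sup>2"
    unfolding S_def using cs_rows[of X u] by (simp add: Xu)
  also have "\<dots> \<le> (norm X)\<^sup>2 * (norm R)\<^sup>2"
    by (intro mult_left_mono nu) simp
  finally have "S / (norm R)\<^sup>2 \<le> (norm X)\<^sup>2" using rho by (simp add: divide_le_eq)
  then have "s * (S / (norm R)\<^sup>2) \<le> s * (norm X)\<^sup>2" using s by (rule mult_left_mono)
  then show ?thesis unfolding X_def[symmetric] v_def[symmetric] u_def[symmetric] S_def[symmetric]
    by simp
qed


lemma inner_bound:
  fixes W :: "complex^'m::finite^'m" and D K :: "complex^'t::finite^'m" and R :: "complex^'m^'t"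
    and c s :: real
  assumes DR: "D ** R = mat 1" and nW: "norm W = 1" and c: "c > 0" and s: "s > 0"
  shows "(\<integral>\<^sup>+ H. ennreal (exp (- s * (norm (c *\<^sub>R (H ** W ** D) + K))\<^sup>2)) \<partial>(cgauss_mat::(complex^'m^'m) measure))
     \<le> ennreal (((norm R)\<^sup>2 * (real CARD('m))\<^sup>2 / (s * c\<^sup>2)) ^ CARD('m))"
proof -
  obtain l j where lj: "(cmod (W$l$j))\<^sup>2 \<ge> 1 / (real CARD('m))\<^sup>2" using big_entry[OF nW] by blast
  define v where "v = (\<chi> l. complex_of_real c * W$l$j)"
  define \<rho> where "\<rho> = (norm R)\<^sup>2"
  have Rnz: "R \<noteq> 0"
  proof
    assume "R = 0"
    then have "(mat 1 :: complex^'m^'m) = 0" using DR by simp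
    then have "(mat 1 :: complex^'m^'m) $ undefined $ undefined = 0" by simp
    then show False by (simp add: mat_def)
  qed
  then have rho: "\<rho> > 0" unfolding \<rho>_def by simp
  have Mpos: "real CARD('m) > 0" by simp
  have Wpos: "(cmod (W$l$j))\<^sup>2 > 0" using lj Mpos by (meson less_le_trans divide_pos_pos zero_less_one zero_less_power)
  have vl: "v$l \<noteq> 0" using Wpos c unfolding v_def by auto
  have cv: "(cmod (v$l))\<^sup>2 = c\<^sup>2 * (cmod (W$l$j))\<^sup>2"
    unfolding v_def using c by (simp add: norm_mult power_mult_distrib)
  define a where "a = s / \<rho>"
  have a: "a > 0" unfolding a_def using s rho by simp
  have "(\<integral>\<^sup>+ H. ennreal (exp (- s * (norm (c *\<^sub>R (H ** W ** D) + K))\<^sup>2)) \<partial>(cgauss_mat::(complex^'m^'m) measure))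
      \<le> (\<integral>\<^sup>+ H. ennreal (exp (- a * (\<Sum>i\<in>UNIV. (cmod ((H *v v)$i + (K *v column j R)$i))\<^sup>2))) \<partial>(cgauss_mat::(complex^'m^'m) measure))"
    unfolding a_def \<rho>_def v_def using s
    by (intro nn_integral_mono ennreal_leI pw_bound[OF DR]) simp
  also have "\<dots> \<le> ennreal ((1 / (a * (cmod (v$l))\<^sup>2)) ^ CARD('m))"
    by (rule core_gauss[OF a vl])
  also have "\<dots> \<le> ennreal (((norm R)\<^sup>2 * (real CARD('m))\<^sup>2 / (s * c\<^sup>2)) ^ CARD('m))"
  proof (intro ennreal_leI power_mono)
    have "1 / (a * (cmod (v$l))\<^sup>2) = \<rho> / (s * c\<^sup>2 * (cmod (W$l$j))\<^sup>2)"
      unfolding a_def cv using rho s c Wpos by (simp add: field_simps)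
    also have "\<dots> \<le> \<rho> / (s * c\<^sup>2 * (1 / (real CARD('m))\<^sup>2))"
      using rho s c Wpos lj Mpos by (intro divide_left_mono mult_left_mono mult_pos_pos) auto
    also have "\<dots> = (norm R)\<^sup>2 * (real CARD('m))\<^sup>2 / (s * c\<^sup>2)"
      unfolding \<rho>_def by simp
    finally show "1 / (a * (cmod (v$l))\<^sup>2) \<le> (norm R)\<^sup>2 * (real CARD('m))\<^sup>2 / (s * c\<^sup>2)" .
    show "0 \<le> 1 / (a * (cmod (v$l))\<^sup>2)" using a by simp
  qed
  finally show ?thesis .
qed


lemma det_shift_poly:
  fixes H :: "complex^'m::finite^'m"
  shows "\<exists>P. P \<noteq> 0 \<and> (\<forall>z. det (H + mat z) = poly P z)"
proof -
  define P where "P = (\<Sum>p\<in>{p. p permutes (UNIV::'m set)}. [:of_int (sign p):] *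
      (\<Prod>i\<in>UNIV. [:H$i$(p i), if p i = i then 1 else 0:]))"
  have ev: "det (H + mat z) = poly P z" for z
    unfolding det_def P_def poly_sum poly_mult poly_prod
    by (intro sum.cong refl arg_cong2[where f="(*)"] prod.cong)
       (auto simp: mat_def)
  have "P \<noteq> 0"
  proof
    assume P0: "P = 0"
    define N where "N = (\<Sum>i\<in>UNIV. \<Sum>j\<in>UNIV. cmod (H$i$j))"
    have N0: "N \<ge> 0" unfolding N_def by (intro sum_nonneg) auto
    define t where "t = N + 1"
    define E where "E = H + mat (complex_of_real t)"
    have "\<forall>x. E *v x = 0 \<longrightarrow> x = 0"
    proof (intro allI impI)
      fix x :: "complex^'m" assume Ex: "E *v x = 0"
      obtain i where imax: "\<And>j. cmod (x$j) \<le> cmod (x$i)"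
      proof -
        have "finite (range (\<lambda>j. cmod (x$j)))" by simp
        have "Max (range (\<lambda>j. cmod (x$j))) \<in> range (\<lambda>j. cmod (x$j))" by (rule Max_in) auto
        then obtain i where "cmod (x$i) = Max (range (\<lambda>j. cmod (x$j)))" by (metis imageE)
        then show ?thesis using that by (metis Max_ge \<open>finite _\<close> rangeI)
      qed
      have "(E *v x)$i = (\<Sum>j\<in>UNIV. H$i$j * x$j + (if i = j then complex_of_real t else 0) * x$j)"
        unfolding E_def matrix_vector_mult_def mat_def by (simp add: distrib_right)
      also have "\<dots> = (H *v x)$i + (\<Sum>j\<in>UNIV. (if i = j then complex_of_real t else 0) * x$j)"
        unfolding sum.distrib matrix_vector_mult_def by simp
      also have "(\<Sum>j\<in>UNIV. (if i = j then complex_of_real t else 0) * x$j) = complex_of_real t * x$i"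
        by (subst sum.cong[OF refl, of _ _ "\<lambda>j. if i = j then complex_of_real t * x$j else 0"]) auto
      finally have comp: "(H *v x)$i + complex_of_real t * x$i = 0"
        using Ex by simp
      have "t * cmod (x$i) = cmod ((H *v x)$i)"
        using comp N0 by (simp add: t_def eq_neg_iff_add_eq_0[symmetric] norm_mult)
      also have "\<dots> \<le> (\<Sum>j\<in>UNIV. cmod (H$i$j) * cmod (x$j))"
        by (simp add: matrix_vector_mult_def) (rule order_trans[OF norm_sum], simp add: norm_mult)
      also have "\<dots> \<le> (\<Sum>j\<in>UNIV. cmod (H$i$j) * cmod (x$i))"
        by (intro sum_mono mult_left_mono imax) auto
      also have "\<dots> \<le> N * cmod (x$i)"
        unfolding N_def sum_distrib_right[symmetric]
        by (intro mult_right_mono member_le_sum[of i UNIV "\<lambda>i. \<Sum>j\<in>UNIV. cmod (H$i$j)"]) 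
           (auto intro: sum_nonneg)
      finally have "N * cmod (x$i) + cmod (x$i) \<le> N * cmod (x$i)" unfolding t_def
        by (simp add: distrib_right)
      then have xi: "cmod (x$i) \<le> 0" by linarith
      have "x$j = 0" for j using imax[of j] xi by simp
      then show "x = 0" by (simp add: vec_eq_iff)
    qed
    then have "invertible E" by (simp add: invertible_left_inverse matrix_left_invertible_ker)
    then have "det E \<noteq> 0" by (simp add: invertible_det_nz)
    moreover have "det E = 0" unfolding E_def ev P0 by simp
    ultimately show False by simp
  qed
  then show ?thesis using ev by blast
qed

lemma finite_sing_line:
  fixes H :: "complex^'m::finite^'m"
  shows "finite {t::real. det (H + t *\<^sub>R mat 1) = 0}"
proof -
  obtain P where P: "P \<noteq> 0" "\<And>z. det (H + mat z) = poly P z" using det_shift_poly by blast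
  have eq: "t *\<^sub>R (mat 1 :: complex^'m^'m) = mat (complex_of_real t)" for t
    by (auto simp: vec_eq_iff mat_def of_real_def)
  have "{t::real. det (H + t *\<^sub>R mat 1) = 0} = complex_of_real -` {z. poly P z = 0}"
    by (auto simp: eq P(2))
  also have "finite \<dots>"
    by (rule finite_vimageI) (use poly_roots_finite[OF P(1)] inj_of_real in auto)
  finally show ?thesis .
qed

lemma det_borel: "(det :: complex^'m::finite^'m \<Rightarrow> complex) \<in> borel_measurable borel"
proof (rule borel_measurable_continuous_onI)
  show "continuous_on UNIV (det :: complex^'m::finite^'m \<Rightarrow> complex)"
    unfolding det_def[abs_def] by (intro continuous_intros)
qed

lemma null_singular: "{H::complex^'m::finite^'m. det H = 0} \<in> null_sets lborel"
proof -
  define S where "S = {H::complex^'m^'m. det H = 0}"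
  define u where "u = (mat 1 :: complex^'m^'m)"
  have Sb: "S \<in> sets borel"
  proof -
    have "S = det -` {0} \<inter> space borel" by (auto simp: S_def)
    then show ?thesis using measurable_sets[OF det_borel, of "{0}"] by simp
  qed
  have pf: "pair_sigma_finite (lborel :: real measure) (lborel :: (complex^'m^'m) measure)"
    by (simp add: pair_sigma_finite.intro sigma_finite_lborel)
  have mplus: "(\<lambda>H. t *\<^sub>R u + H) \<in> borel_measurable (borel :: (complex^'m^'m) measure)" for t
    by measurable
  have trans: "emeasure lborel S = (\<integral>\<^sup>+ H. indicator S (t *\<^sub>R u + H) \<partial>lborel)" for t
  proof -
    have pre: "(+) (t *\<^sub>R u) -` S \<in> sets borel" using measurable_sets[OF mplus Sb] by simp
    have "emeasure lborel S = emeasure (distr lborel borel ((+) (t *\<^sub>R u))) S"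
      by (simp add: lborel_distr_plus)
    also have "\<dots> = emeasure lborel ((+) (t *\<^sub>R u) -` S \<inter> space lborel)"
      using Sb mplus by (subst emeasure_distr) auto
    also have "\<dots> = emeasure lborel ((+) (t *\<^sub>R u) -` S)" by simp
    also have "\<dots> = (\<integral>\<^sup>+ H. indicator ((+) (t *\<^sub>R u) -` S) H \<partial>lborel)"
      by (rule nn_integral_indicator[symmetric]) (use pre in simp)
    also have "\<dots> = (\<integral>\<^sup>+ H. indicator S (t *\<^sub>R u + H) \<partial>lborel)"
      by (simp add: indicator_def)
    finally show ?thesis .
  qed
  have mf: "(\<lambda>(t, H). indicator {0..1::real} t * indicator S (t *\<^sub>R u + H) :: ennreal)
      \<in> borel_measurable ((lborel :: real measure) \<Otimes>\<^sub>M (lborel :: (complex^'m^'m) measure))"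
    using Sb by measurable
  have "(\<integral>\<^sup>+ t. indicator {0..1::real} t * emeasure lborel S \<partial>lborel)
      = (\<integral>\<^sup>+ t. indicator {0..1::real} t \<partial>lborel) * emeasure lborel S"
    by (rule nn_integral_multc) simp
  then have "emeasure lborel S = (\<integral>\<^sup>+ t. indicator {0..1::real} t * emeasure lborel S \<partial>lborel)"
    by simp
  also have "\<dots> = (\<integral>\<^sup>+ t. (\<integral>\<^sup>+ H. indicator {0..1::real} t * indicator S (t *\<^sub>R u + H) \<partial>lborel) \<partial>lborel)"
  proof (intro nn_integral_cong)
    fix t :: real
    have m: "(\<lambda>H. indicator S (t *\<^sub>R u + H) :: ennreal) \<in> borel_measurable lborel"
      using Sb by measurable
    show "indicator {0..1::real} t * emeasure lborel S = (\<integral>\<^sup>+ H. indicator {0..1::real} t * indicator S (t *\<^sub>R u + H) \<partial>lborel)"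
      by (simp add: nn_integral_cmult[OF m] trans[of t])
  qed
  also have "\<dots> = (\<integral>\<^sup>+ H. (\<integral>\<^sup>+ t. indicator {0..1::real} t * indicator S (t *\<^sub>R u + H) \<partial>lborel) \<partial>lborel)"
    using pair_sigma_finite.Fubini'[OF pf mf] by simp
  also have "\<dots> = (\<integral>\<^sup>+ H. 0 \<partial>(lborel :: (complex^'m^'m) measure))"
  proof (rule nn_integral_cong)
    fix H :: "complex^'m^'m"
    have fin: "finite {t::real. det (H + t *\<^sub>R mat 1) = 0}" by (rule finite_sing_line)
    have "(\<integral>\<^sup>+ t. indicator {0..1::real} t * indicator S (t *\<^sub>R u + H) \<partial>lborel)
        \<le> (\<integral>\<^sup>+ t. indicator {t::real. det (H + t *\<^sub>R mat 1) = 0} t \<partial>lborel)"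
      by (intro nn_integral_mono) (auto simp: S_def u_def indicator_def add.commute)
    also have "\<dots> = emeasure lborel {t::real. det (H + t *\<^sub>R mat 1) = 0}"
      using finite_imp_null_set_lborel[OF fin] by (subst nn_integral_indicator) auto
    also have "\<dots> = 0" using finite_imp_null_set_lborel[OF fin] by auto
    finally show "(\<integral>\<^sup>+ t. indicator {0..1::real} t * indicator S (t *\<^sub>R u + H) \<partial>lborel) = 0" by simp
  qed
  finally have "emeasure lborel S = 0" by simp
  then show ?thesis using Sb unfolding S_def by (simp add: null_sets_def)
qed

lemma AE_invertible: "AE H in (cgauss_mat :: (complex^'m::finite^'m) measure). invertible H"
proof -
  have "AE H in (lborel :: (complex^'m^'m) measure). invertible H"
    by (rule AE_I'[OF null_singular]) (auto simp: invertible_det_nz)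
  then show ?thesis unfolding cgauss_mat_def
    by (subst AE_density) (auto elim: AE_mp)
qed


lemma inner_Q:
  fixes W :: "complex^'m::finite^'m" and D K :: "complex^'t::finite^'m" and R :: "complex^'m^'t"
    and c \<sigma>2 P :: real
  assumes DR: "D ** R = mat 1" and nW: "norm W = 1" and c: "c > 0" and sg: "\<sigma>2 > 0" and P: "P > 0"
  shows "(\<integral>\<^sup>+ H. ennreal (Qfun (sqrt (P * (norm (c *\<^sub>R (H ** W ** D) + K))\<^sup>2 / (2 * \<sigma>2)))) \<partial>(cgauss_mat::(complex^'m^'m) measure))
     \<le> ennreal (2 * ((norm R)\<^sup>2 * (real CARD('m))\<^sup>2 * (8 * \<sigma>2) / c\<^sup>2) ^ CARD('m) * (1 / P) ^ CARD('m))"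
proof -
  define s where "s = P / (8 * \<sigma>2)"
  have s: "s > 0" unfolding s_def using P sg by simp
  have pw: "Qfun (sqrt (P * (norm (c *\<^sub>R (H ** W ** D) + K))\<^sup>2 / (2 * \<sigma>2)))
      \<le> 2 * exp (- s * (norm (c *\<^sub>R (H ** W ** D) + K))\<^sup>2)" for H :: "complex^'m^'m"
  proof -
    define N where "N = (norm (c *\<^sub>R (H ** W ** D) + K))\<^sup>2"
    have N: "N \<ge> 0" unfolding N_def by simp
    have "Qfun (sqrt (P * N / (2 * \<sigma>2))) \<le> 2 * exp (- (sqrt (P * N / (2 * \<sigma>2)))\<^sup>2 / 4)"
      by (rule Qfun_bound) (use P N sg in simp)
    also have "(sqrt (P * N / (2 * \<sigma>2)))\<^sup>2 = P * N / (2 * \<sigma>2)"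
      using P N sg by simp
    also have "- (P * N / (2 * \<sigma>2)) / 4 = - s * N" unfolding s_def using sg by (simp add: field_simps)
    finally show ?thesis unfolding N_def .
  qed
  have "(\<integral>\<^sup>+ H. ennreal (Qfun (sqrt (P * (norm (c *\<^sub>R (H ** W ** D) + K))\<^sup>2 / (2 * \<sigma>2)))) \<partial>(cgauss_mat::(complex^'m^'m) measure))
      \<le> (\<integral>\<^sup>+ H. ennreal 2 * ennreal (exp (- s * (norm (c *\<^sub>R (H ** W ** D) + K))\<^sup>2)) \<partial>(cgauss_mat::(complex^'m^'m) measure))"
    by (intro nn_integral_mono) (metis pw ennreal_leI ennreal_mult exp_ge_zero zero_le_numeral)
  also have "\<dots> = ennreal 2 * (\<integral>\<^sup>+ H. ennreal (exp (- s * (norm (c *\<^sub>R (H ** W ** D) + K))\<^sup>2)) \<partial>(cgauss_mat::(complex^'m^'m) measure))"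
  proof (rule nn_integral_cmult)
    have cont: "continuous_on UNIV (\<lambda>H::complex^'m^'m. H ** W ** D)"
      unfolding matrix_matrix_mult_def by (intro continuous_intros)
    have mr: "(\<lambda>H::complex^'m^'m. exp (- s * (norm (c *\<^sub>R (H ** W ** D) + K))\<^sup>2)) \<in> borel_measurable borel"
      by (intro borel_measurable_continuous_onI continuous_intros cont)
    have "(\<lambda>H::complex^'m^'m. ennreal (exp (- s * (norm (c *\<^sub>R (H ** W ** D) + K))\<^sup>2))) \<in> borel_measurable borel"
      using mr by measurable
    then show "(\<lambda>H::complex^'m^'m. ennreal (exp (- s * (norm (c *\<^sub>R (H ** W ** D) + K))\<^sup>2))) \<in> borel_measurable cgauss_mat"
      unfolding cgauss_mat_def by (simp add: measurable_cong_sets[OF sets_density refl])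
  qed
  also have "\<dots> \<le> ennreal 2 * ennreal (((norm R)\<^sup>2 * (real CARD('m))\<^sup>2 / (s * c\<^sup>2)) ^ CARD('m))"
    by (intro mult_left_mono inner_bound[OF DR nW c s]) simp
  also have "\<dots> = ennreal (2 * ((norm R)\<^sup>2 * (real CARD('m))\<^sup>2 * (8 * \<sigma>2) / c\<^sup>2) ^ CARD('m) * (1 / P) ^ CARD('m))"
  proof -
    define Q where "Q = (norm R)\<^sup>2 * (real CARD('m))\<^sup>2 * (8 * \<sigma>2) / c\<^sup>2"
    have Q: "Q \<ge> 0" unfolding Q_def using sg by simp
    have eq: "(norm R)\<^sup>2 * (real CARD('m))\<^sup>2 / (s * c\<^sup>2) = Q * (1 / P)"
      unfolding s_def Q_def using P sg c by (simp add: field_simps)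
    have "ennreal 2 * ennreal ((Q * (1 / P)) ^ CARD('m)) = ennreal (2 * (Q * (1 / P)) ^ CARD('m))"
      by (rule ennreal_mult[symmetric]) (use Q P in auto)
    then show ?thesis unfolding eq Q_def[symmetric] by (simp only: power_mult_distrib mult.assoc)
  qed
  finally show ?thesis .
qed


lemma nn_le_const_AE:
  assumes "prob_space N" "AE x in N. f x \<le> ennreal B"
  shows "integral\<^sup>N N f \<le> ennreal B"
proof -
  have "integral\<^sup>N N f \<le> (\<integral>\<^sup>+ x. ennreal B \<partial>N)" by (rule nn_integral_mono_AE[OF assms(2)])
  also have "\<dots> = ennreal B" using prob_space.emeasure_space_1[OF assms(1)] by simp
  finally show ?thesis .
qed

lemma Qfun_nonneg: "0 \<le> Qfun x"
  unfolding Qfun_def set_lebesgue_integral_def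
  by (intro divide_nonneg_nonneg integral_nonneg) (auto simp: indicator_def)

theorem theorem1:
  fixes c1 c2 \<sigma>2 :: real
    and C1 C2 :: "(complex^'t::finite^'m::finite) set"
    and A A' B B' :: "complex^'t^'m"
  assumes "CARD('m) \<le> CARD('t)"
    and "c1 > 0" and "c2 > 0" and "\<sigma>2 > 0"
    and "finite C1" and "finite C2"
    and "\<forall>X\<in>C1. \<forall>X'\<in>C1. X \<noteq> X' \<longrightarrow> rank (X - X') = CARD('m)"
    and "\<forall>Y\<in>C2. \<forall>Y'\<in>C2. Y \<noteq> Y' \<longrightarrow> rank (Y - Y') = CARD('m)"
    and "A \<in> C1" and "A' \<in> C1" and "B \<in> C2" and "B' \<in> C2"
    and "(A, B) \<noteq> (A', B')"
  shows "\<exists>c>0. \<forall>\<^sub>F P in at_top.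
           pep c1 c2 \<sigma>2 P A A' B B' \<le> c * P powr (- real CARD('m))"
proof -
  note c1 = \<open>c1 > 0\<close> and c2 = \<open>c2 > 0\<close> and sg = \<open>\<sigma>2 > 0\<close>
  define \<mu> where "\<mu> = (cgauss_mat :: (complex^'m^'m) measure)"
  have p1: "prob_space \<mu>" unfolding \<mu>_def by (rule prob_space_cgauss)
  have p2: "prob_space (\<mu> \<Otimes>\<^sub>M \<mu>)" by (rule prob_space_pair[OF p1 p1])
  have p3: "prob_space (\<mu> \<Otimes>\<^sub>M (\<mu> \<Otimes>\<^sub>M \<mu>))" by (rule prob_space_pair[OF p1 p2])
  have s1: "sigma_finite_measure \<mu>" by (rule prob_space_imp_sigma_finite[OF p1])
  have s2: "sigma_finite_measure (\<mu> \<Otimes>\<^sub>M \<mu>)" by (rule prob_space_imp_sigma_finite[OF p2])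
  have s3: "sigma_finite_measure (\<mu> \<Otimes>\<^sub>M (\<mu> \<Otimes>\<^sub>M \<mu>))" by (rule prob_space_imp_sigma_finite[OF p3])
  have chan: "channel_measure = \<mu> \<Otimes>\<^sub>M (\<mu> \<Otimes>\<^sub>M (\<mu> \<Otimes>\<^sub>M \<mu>))"
    unfolding channel_measure_def \<mu>_def ..
  have AEinv: "AE H in \<mu>. invertible H" unfolding \<mu>_def by (rule AE_invertible)
  define \<Phi> :: "real \<Rightarrow> (complex^'m^'m) \<times> (complex^'m^'m) \<times> (complex^'m^'m) \<times> (complex^'m^'m) \<Rightarrow> real"
    where "\<Phi> = (\<lambda>P (H11, H12, H21, H22). Qfun (sqrt (P * (norm
         (sqrt c1 *\<^sub>R (H11 ** precoder H12 ** (A - A'))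
          + sqrt c2 *\<^sub>R (H21 ** precoder H22 ** (B - B'))))\<^sup>2 / (2 * \<sigma>2))))"
  have main: "\<exists>\<kappa>>0. \<forall>P>0. (\<integral>\<^sup>+ z. ennreal (\<Phi> P z) \<partial>channel_measure) \<le> ennreal (\<kappa> * (1 / P) ^ CARD('m))"
  proof (cases "A = A'")
    case False
    have rk: "rank (A - A') = CARD('m)" using assms(7) assms(9,10) False by blast
    obtain R where DR: "(A - A') ** R = mat 1" using rank_right_inv[OF rk] by blast
    have Rnz: "R \<noteq> 0"
    proof
      assume "R = 0"
      then have "(mat 1 :: complex^'m^'m) = 0" using DR by simp
      then have "(mat 1 :: complex^'m^'m) $ undefined $ undefined = 0" by simp
      then show False by (simp add: mat_def)
    qed
    define \<kappa> where "\<kappa> = 2 * ((norm R)\<^sup>2 * (real CARD('m))\<^sup>2 * (8 * \<sigma>2) / (sqrt c1)\<^sup>2) ^ CARD('m)"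
    have \<kappa>: "\<kappa> > 0" unfolding \<kappa>_def using Rnz c1 sg by simp
    show ?thesis
    proof (intro exI[of _ \<kappa>] conjI allI impI)
      show "\<kappa> > 0" by (rule \<kappa>)
      fix P :: real assume P: "P > 0"
      define B0 where "B0 = \<kappa> * (1 / P) ^ CARD('m)"
      have inner: "(\<integral>\<^sup>+ H11. ennreal (\<Phi> P (H11, H12, z)) \<partial>\<mu>) \<le> ennreal B0" if inv: "invertible H12" for H12 z
      proof -
        obtain H21 H22 where z: "z = (H21, H22)" by (cases z)
        have "(\<integral>\<^sup>+ H11. ennreal (\<Phi> P (H11, H12, z)) \<partial>\<mu>) = (\<integral>\<^sup>+ H11. ennreal (Qfun (sqrt (P * (norm
           (sqrt c1 *\<^sub>R (H11 ** precoder H12 ** (A - A'))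
            + sqrt c2 *\<^sub>R (H21 ** precoder H22 ** (B - B'))))\<^sup>2 / (2 * \<sigma>2)))) \<partial>\<mu>)"
          by (simp add: \<Phi>_def z)
        also have "\<dots> \<le> ennreal B0" unfolding \<mu>_def B0_def \<kappa>_def
          by (rule inner_Q[OF DR precoder_norm[OF inv] _ sg P]) (use c1 in simp)
        finally show ?thesis .
      qed
      have "(\<integral>\<^sup>+ z. ennreal (\<Phi> P z) \<partial>channel_measure)
          \<le> (\<integral>\<^sup>+ y. \<integral>\<^sup>+ H11. ennreal (\<Phi> P (H11, y)) \<partial>\<mu> \<partial>(\<mu> \<Otimes>\<^sub>M (\<mu> \<Otimes>\<^sub>M \<mu>)))"
        unfolding chan by (rule nn_pair_le_snd[OF s3 s1])
      also have "\<dots> \<le> (\<integral>\<^sup>+ H12. \<integral>\<^sup>+ z. (\<integral>\<^sup>+ H11. ennreal (\<Phi> P (H11, H12, z)) \<partial>\<mu>) \<partial>(\<mu> \<Otimes>\<^sub>M \<mu>) \<partial>\<mu>)"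
        by (rule nn_pair_le_fst[OF s2 s1])
      also have "\<dots> \<le> ennreal B0"
      proof (rule nn_le_const_AE[OF p1])
        show "AE H12 in \<mu>. (\<integral>\<^sup>+ z. (\<integral>\<^sup>+ H11. ennreal (\<Phi> P (H11, H12, z)) \<partial>\<mu>) \<partial>(\<mu> \<Otimes>\<^sub>M \<mu>)) \<le> ennreal B0"
          using AEinv
        proof eventually_elim
          case (elim H12)
          show ?case by (intro nn_le_const_AE[OF p2] AE_I2 inner[OF elim])
        qed
      qed
      finally show "(\<integral>\<^sup>+ z. ennreal (\<Phi> P z) \<partial>channel_measure) \<le> ennreal (\<kappa> * (1 / P) ^ CARD('m))"
        unfolding B0_def .
    qed
  next
    case True
    then have BB: "B \<noteq> B'" using assms(13) by blast
    have rk: "rank (B - B') = CARD('m)" using assms(8) assms(11,12) BB by blast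
    obtain R where DR: "(B - B') ** R = mat 1" using rank_right_inv[OF rk] by blast
    have Rnz: "R \<noteq> 0"
    proof
      assume "R = 0"
      then have "(mat 1 :: complex^'m^'m) = 0" using DR by simp
      then have "(mat 1 :: complex^'m^'m) $ undefined $ undefined = 0" by simp
      then show False by (simp add: mat_def)
    qed
    define \<kappa> where "\<kappa> = 2 * ((norm R)\<^sup>2 * (real CARD('m))\<^sup>2 * (8 * \<sigma>2) / (sqrt c2)\<^sup>2) ^ CARD('m)"
    have \<kappa>: "\<kappa> > 0" unfolding \<kappa>_def using Rnz c2 sg by simp
    show ?thesis
    proof (intro exI[of _ \<kappa>] conjI allI impI)
      show "\<kappa> > 0" by (rule \<kappa>)
      fix P :: real assume P: "P > 0"
      define B0 where "B0 = \<kappa> * (1 / P) ^ CARD('m)"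
      have inner: "(\<integral>\<^sup>+ H21. ennreal (\<Phi> P (H11, H12, H21, H22)) \<partial>\<mu>) \<le> ennreal B0" if inv: "invertible H22" for H11 H12 H22
      proof -
        have "(\<integral>\<^sup>+ H21. ennreal (\<Phi> P (H11, H12, H21, H22)) \<partial>\<mu>) = (\<integral>\<^sup>+ H21. ennreal (Qfun (sqrt (P * (norm
           (sqrt c2 *\<^sub>R (H21 ** precoder H22 ** (B - B'))
            + sqrt c1 *\<^sub>R (H11 ** precoder H12 ** (A - A'))))\<^sup>2 / (2 * \<sigma>2)))) \<partial>\<mu>)"
          by (simp add: \<Phi>_def add.commute)
        also have "\<dots> \<le> ennreal B0" unfolding \<mu>_def B0_def \<kappa>_def
          by (rule inner_Q[OF DR precoder_norm[OF inv] _ sg P]) (use c2 in simp)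
        finally show ?thesis .
      qed
      have "(\<integral>\<^sup>+ z. ennreal (\<Phi> P z) \<partial>channel_measure)
          \<le> (\<integral>\<^sup>+ H11. \<integral>\<^sup>+ y. ennreal (\<Phi> P (H11, y)) \<partial>(\<mu> \<Otimes>\<^sub>M (\<mu> \<Otimes>\<^sub>M \<mu>)) \<partial>\<mu>)"
        unfolding chan by (rule nn_pair_le_fst[OF s3 s1])
      also have "\<dots> \<le> ennreal B0"
      proof (intro nn_le_const_AE[OF p1] AE_I2)
        fix H11
        have "(\<integral>\<^sup>+ y. ennreal (\<Phi> P (H11, y)) \<partial>(\<mu> \<Otimes>\<^sub>M (\<mu> \<Otimes>\<^sub>M \<mu>)))
            \<le> (\<integral>\<^sup>+ H12. \<integral>\<^sup>+ w. ennreal (\<Phi> P (H11, H12, w)) \<partial>(\<mu> \<Otimes>\<^sub>M \<mu>) \<partial>\<mu>)"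
          by (rule nn_pair_le_fst[OF s2 s1])
        also have "\<dots> \<le> ennreal B0"
        proof (intro nn_le_const_AE[OF p1] AE_I2)
          fix H12
          have "(\<integral>\<^sup>+ w. ennreal (\<Phi> P (H11, H12, w)) \<partial>(\<mu> \<Otimes>\<^sub>M \<mu>))
              \<le> (\<integral>\<^sup>+ H22. \<integral>\<^sup>+ H21. ennreal (\<Phi> P (H11, H12, H21, H22)) \<partial>\<mu> \<partial>\<mu>)"
            by (rule nn_pair_le_snd[OF s1 s1])
          also have "\<dots> \<le> ennreal B0"
          proof (rule nn_le_const_AE[OF p1])
            show "AE H22 in \<mu>. (\<integral>\<^sup>+ H21. ennreal (\<Phi> P (H11, H12, H21, H22)) \<partial>\<mu>) \<le> ennreal B0"
              using AEinv by eventually_elim (rule inner)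
          qed
          finally show "(\<integral>\<^sup>+ w. ennreal (\<Phi> P (H11, H12, w)) \<partial>(\<mu> \<Otimes>\<^sub>M \<mu>)) \<le> ennreal B0" .
        qed
        finally show "(\<integral>\<^sup>+ y. ennreal (\<Phi> P (H11, y)) \<partial>(\<mu> \<Otimes>\<^sub>M (\<mu> \<Otimes>\<^sub>M \<mu>))) \<le> ennreal B0" .
      qed
      finally show "(\<integral>\<^sup>+ z. ennreal (\<Phi> P z) \<partial>channel_measure) \<le> ennreal (\<kappa> * (1 / P) ^ CARD('m))"
        unfolding B0_def .
    qed
  qed
  then obtain \<kappa> where \<kappa>: "\<kappa> > 0" and bnd: "\<And>P. P > 0 \<Longrightarrow> (\<integral>\<^sup>+ z. ennreal (\<Phi> P z) \<partial>channel_measure) \<le> ennreal (\<kappa> * (1 / P) ^ CARD('m))"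
    by blast
  have "\<forall>\<^sub>F P in at_top. pep c1 c2 \<sigma>2 P A A' B B' \<le> \<kappa> * P powr (- real CARD('m))"
    using eventually_gt_at_top[of "0::real"]
  proof eventually_elim
    case (elim P)
    have "pep c1 c2 \<sigma>2 P A A' B B' = integral\<^sup>L channel_measure (\<Phi> P)"
      unfolding pep_def \<Phi>_def ..
    also have "\<dots> \<le> \<kappa> * (1 / P) ^ CARD('m)"
    proof (rule integral_le_from_nn[OF _ bnd[OF elim]])
      show "0 \<le> \<Phi> P t" for t by (auto simp: \<Phi>_def Qfun_nonneg split: prod.splits)
      show "0 \<le> \<kappa> * (1 / P) ^ CARD('m)" using \<kappa> elim by simp
    qed
    also have "(1 / P) ^ CARD('m) = P powr (- real CARD('m))"
      using elim by (simp add: powr_minus powr_realpow power_one_over inverse_eq_divide)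
    finally show ?case .
  qed
  then show ?thesis using \<kappa> by blast
qed


end
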